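(* Let $G$ be a bipartite graph with $n$ vertices, at least one edge, and maximum vertex degree $\Delta$. Then $$EE(G) \ge 2\cosh\sqrt{\Delta} + (n-2),$$ with equality if and only if $G\cong S_n$ or $G\cong S_{\Delta+1}\cup (n-\Delta-1)K_1$.
   Context: All graphs are finite, simple and undirected. For a graph $G$ with adjacency matrix $A(G)$ having eigenvalues $\lambda_1\ge\cdots\ge\lambda_n$, the Estrada index is $EE(G)=\sum_{i=1}^n e^{\lambda_i}$. $S_k=K_{1,k-1}$ denotes the star on $k$ vertices; $\cup$ denotes disjoint union and $rK_1$ denotes $r$ isolated vertices. *)

theory Defs
  imports Complex_Main "Jordan_Normal_Form.Char_Poly"
begin

text \<open>A finite simple graph on the vertex set {0..<n}, given by an adjacency
  relation E (only its values on {0..<n} matter).\<close>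
definition simple_graph :: "nat \<Rightarrow> (nat \<Rightarrow> nat \<Rightarrow> bool) \<Rightarrow> bool" where
  "simple_graph n E \<longleftrightarrow> (\<forall>i<n. \<forall>j<n. E i j \<longleftrightarrow> E j i) \<and> (\<forall>i<n. \<not> E i i)"

definition adj_matrix :: "nat \<Rightarrow> (nat \<Rightarrow> nat \<Rightarrow> bool) \<Rightarrow> real mat" where
  "adj_matrix n E = mat n n (\<lambda>(i, j). if E i j then 1 else 0)"

text \<open>Estrada index: sum of exp over the eigenvalues (with multiplicity) of the
  adjacency matrix, i.e. over the roots of its characteristic polynomial
  (all real since the matrix is real symmetric).\<close>
definition estrada_index :: "nat \<Rightarrow> (nat \<Rightarrow> nat \<Rightarrow> bool) \<Rightarrow> real" where
  "estrada_index n E = (\<Sum>x\<in>#proots (char_poly (adj_matrix n E)). exp x)"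

definition degree :: "nat \<Rightarrow> (nat \<Rightarrow> nat \<Rightarrow> bool) \<Rightarrow> nat \<Rightarrow> nat" where
  "degree n E i = card {j. j < n \<and> E i j}"

definition max_degree :: "nat \<Rightarrow> (nat \<Rightarrow> nat \<Rightarrow> bool) \<Rightarrow> nat" where
  "max_degree n E = Max (degree n E ` {0..<n})"

definition bipartite :: "nat \<Rightarrow> (nat \<Rightarrow> nat \<Rightarrow> bool) \<Rightarrow> bool" where
  "bipartite n E \<longleftrightarrow> (\<exists>c :: nat \<Rightarrow> bool. \<forall>i<n. \<forall>j<n. E i j \<longrightarrow> c i \<noteq> c j)"

definition has_edge :: "nat \<Rightarrow> (nat \<Rightarrow> nat \<Rightarrow> bool) \<Rightarrow> bool" where
  "has_edge n E \<longleftrightarrow> (\<exists>i<n. \<exists>j<n. E i j)"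

definition graph_iso :: "nat \<Rightarrow> (nat \<Rightarrow> nat \<Rightarrow> bool) \<Rightarrow> (nat \<Rightarrow> nat \<Rightarrow> bool) \<Rightarrow> bool" where
  "graph_iso n E F \<longleftrightarrow> (\<exists>f. bij_betw f {0..<n} {0..<n} \<and>
      (\<forall>i<n. \<forall>j<n. E i j \<longleftrightarrow> F (f i) (f j)))"

text \<open>Star S_k = K_{1,k-1} on vertices {0..<k} (centre 0), together with isolated
  vertices k, k+1, ... (when viewed on a larger vertex set {0..<n}, this is
  S_k \<union> (n-k)K_1).\<close>
definition star_plus_isolated :: "nat \<Rightarrow> nat \<Rightarrow> nat \<Rightarrow> bool" where
  "star_plus_isolated k i j \<longleftrightarrow> i < k \<and> j < k \<and> i \<noteq> j \<and> (i = 0 \<or> j = 0)"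

end

theory Submission
  imports Defs "Jordan_Normal_Form.Schur_Decomposition"
begin


definition tr :: "'a::comm_ring_1 mat \<Rightarrow> 'a" where
  "tr M = (\<Sum>i\<in>{0..<dim_row M}. M $$ (i,i))"

lemma tr_mult_comm:
  fixes A B :: "'a::comm_ring_1 mat"
  assumes A: "A \<in> carrier_mat n m" and B: "B \<in> carrier_mat m n"
  shows "tr (A * B) = tr (B * A)"
proof -
  have "tr (A * B) = (\<Sum>i\<in>{0..<n}. \<Sum>l\<in>{0..<m}. A $$ (i,l) * B $$ (l,i))"
    unfolding tr_def using A B by (auto simp: scalar_prod_def intro!: sum.cong)
  also have "\<dots> = (\<Sum>l\<in>{0..<m}. \<Sum>i\<in>{0..<n}. B $$ (l,i) * A $$ (i,l))"
    by (subst sum.swap) (simp add: mult.commute)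
  also have "\<dots> = tr (B * A)"
    unfolding tr_def using A B by (auto simp: scalar_prod_def intro!: sum.cong)
  finally show ?thesis .
qed

lemma upper_pow:
  fixes B :: "'a::comm_ring_1 mat"
  assumes B: "B \<in> carrier_mat n n" and ut: "upper_triangular B"
  shows "upper_triangular (B ^\<^sub>m k) \<and> (\<forall>i<n. (B ^\<^sub>m k) $$ (i,i) = (B $$ (i,i)) ^ k)"
proof (induction k)
  case 0
  then show ?case using B by auto
next
  case (Suc k)
  let ?C = "B ^\<^sub>m k"
  have C: "?C \<in> carrier_mat n n" using B by auto
  have utC: "\<And>i j. i < n \<Longrightarrow> j < i \<Longrightarrow> ?C $$ (i,j) = 0"
    using Suc.IH C unfolding upper_triangular_def by auto
  have utB: "\<And>i j. i < n \<Longrightarrow> j < i \<Longrightarrow> B $$ (i,j) = 0"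
    using ut B unfolding upper_triangular_def by auto
  have e: "\<And>i j. i < n \<Longrightarrow> j < n \<Longrightarrow> (?C * B) $$ (i,j) = (\<Sum>l\<in>{0..<n}. ?C $$ (i,l) * B $$ (l,j))"
    using B C by (auto simp: scalar_prod_def intro!: sum.cong)
  have "upper_triangular (?C * B)"
    unfolding upper_triangular_def
  proof (intro allI impI)
    fix i j assume i: "i < dim_row (?C * B)" and j: "j < i"
    have i': "i < n" using i C by auto
    have "(\<Sum>l\<in>{0..<n}. ?C $$ (i,l) * B $$ (l,j)) = 0"
    proof (rule sum.neutral, intro ballI)
      fix l assume l: "l \<in> {0..<n}"
      show "?C $$ (i,l) * B $$ (l,j) = 0"
      proof (cases "l < i")
        case True then show ?thesis using utC[OF i'] by simp
      next
        case False then have "j < l" using j by simp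
        then show ?thesis using utB l by simp
      qed
    qed
    then show "(?C * B) $$ (i,j) = 0" using e i' j by simp
  qed
  moreover have "\<forall>i<n. (?C * B) $$ (i,i) = (B $$ (i,i)) ^ Suc k"
  proof (intro allI impI)
    fix i assume i: "i < n"
    have "(\<Sum>l\<in>{0..<n}. ?C $$ (i,l) * B $$ (l,i)) = ?C $$ (i,i) * B $$ (i,i)"
    proof -
      have "(\<Sum>l\<in>{0..<n}. ?C $$ (i,l) * B $$ (l,i)) = ?C $$ (i,i) * B $$ (i,i) + (\<Sum>l\<in>{0..<n}-{i}. ?C $$ (i,l) * B $$ (l,i))"
        using i by (subst sum.remove[of _ i]) auto
      also have "(\<Sum>l\<in>{0..<n}-{i}. ?C $$ (i,l) * B $$ (l,i)) = 0"
      proof (rule sum.neutral, intro ballI)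
        fix l assume l: "l \<in> {0..<n}-{i}"
        show "?C $$ (i,l) * B $$ (l,i) = 0"
        proof (cases "l < i")
          case True then show ?thesis using utC[OF i] by simp
        next
          case False then have "i < l" using l by auto
          then show ?thesis using utB l by simp
        qed
      qed
      finally show ?thesis by simp
    qed
    then show "(?C * B) $$ (i,i) = (B $$ (i,i)) ^ Suc k" using e[OF i i] Suc.IH i by simp
  qed
  ultimately show ?case by simp
qed

lemma real_eigenvalue:
  fixes A :: "real mat"
  assumes A: "A \<in> carrier_mat n n" and sym: "\<And>i j. i < n \<Longrightarrow> j < n \<Longrightarrow> A $$ (i,j) = A $$ (j,i)"
    and ev: "eigenvalue (map_mat complex_of_real A) c"
  shows "Im c = 0"
proof -
  let ?Ac = "map_mat complex_of_real A"
  obtain v where v: "eigenvector ?Ac v c" using ev unfolding eigenvalue_def by blast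
  have vc: "v \<in> carrier_vec n" and v0: "v \<noteq> 0\<^sub>v n" and eq: "?Ac *\<^sub>v v = c \<cdot>\<^sub>v v"
    using v A unfolding eigenvector_def by auto
  define s where "s = (\<Sum>i\<in>{0..<n}. cnj (v $ i) * (?Ac *\<^sub>v v) $ i)"
  define N where "N = (\<Sum>i\<in>{0..<n}. cnj (v $ i) * v $ i)"
  have s1: "s = c * N" unfolding s_def N_def eq using vc
    by (auto simp: sum_distrib_left intro!: sum.cong)
  have s2: "s = (\<Sum>i\<in>{0..<n}. \<Sum>j\<in>{0..<n}. cnj (v $ i) * of_real (A $$ (i,j)) * v $ j)"
    unfolding s_def using vc A by (auto simp: scalar_prod_def sum_distrib_left mult.assoc intro!: sum.cong)
  have "cnj s = (\<Sum>i\<in>{0..<n}. \<Sum>j\<in>{0..<n}. v $ i * of_real (A $$ (i,j)) * cnj (v $ j))"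
    unfolding s2 by (simp add: cnj_sum)
  also have "\<dots> = (\<Sum>j\<in>{0..<n}. \<Sum>i\<in>{0..<n}. v $ i * of_real (A $$ (i,j)) * cnj (v $ j))"
    by (rule sum.swap)
  also have "\<dots> = s" unfolding s2
    by (intro sum.cong refl) (auto simp: sym mult.commute mult.left_commute)
  finally have "cnj s = s" .
  have Ims: "Im s = 0" using arg_cong[OF \<open>cnj s = s\<close>, of Im] by simp
  have N: "N = of_real (\<Sum>i\<in>{0..<n}. (cmod (v $ i))^2)"
    unfolding N_def of_real_sum by (intro sum.cong refl) (simp only: complex_norm_square mult.commute)
  have "\<exists>i<n. v $ i \<noteq> 0" proof (rule ccontr)
    assume "\<not> (\<exists>i<n. v $ i \<noteq> 0)"
    then have "v = 0\<^sub>v n" using vc by (intro eq_vecI) auto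
    then show False using v0 by simp
  qed
  then obtain i where i: "i < n" "v $ i \<noteq> 0" by blast
  have "0 < (\<Sum>i\<in>{0..<n}. (cmod (v $ i))^2)"
    by (rule sum_pos2[of _ i]) (use i in auto)
  moreover have "Im s = Im c * (\<Sum>i\<in>{0..<n}. (cmod (v $ i))^2)"
    unfolding s1 N by simp
  ultimately show ?thesis using Ims by simp
qed

lemma proots_linear_prod: "proots (\<Prod>e\<leftarrow>es. [:- e, 1:]) = mset (es :: 'a :: idom list)"
proof (induction es)
  case Nil then show ?case by simp
next
  case (Cons a es)
  have nz: "(\<Prod>e\<leftarrow>es. [:- e, 1:]) \<noteq> (0 :: 'a poly)"
    by (auto simp: prod_list_zero_iff)
  have "proots (\<Prod>e\<leftarrow>a#es. [:- e, 1:]) = proots ([:- a, 1:] * (\<Prod>e\<leftarrow>es. [:- e, 1:]))"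
    by (simp only: list.map prod_list.Cons)
  also have "\<dots> = proots [:- a, 1:] + proots (\<Prod>e\<leftarrow>es. [:- e, 1:])"
    using nz by (intro proots_mult) auto
  finally show ?case using Cons by simp
qed

lemma map_poly_linear_prod:
  "map_poly complex_of_real (\<Prod>e\<leftarrow>es. [:- e, 1:]) = (\<Prod>e\<leftarrow>map complex_of_real es. [:- e, 1:])"
proof -
  interpret mp: map_poly_comm_ring_hom complex_of_real ..
  show ?thesis by (induction es) (simp_all only: list.map prod_list.Cons prod_list.Nil mp.hom_mult mp.hom_one o_def, simp)
qed

lemma spectral:
  fixes A :: "real mat"
  assumes A: "A \<in> carrier_mat n n" and sym: "\<And>i j. i < n \<Longrightarrow> j < n \<Longrightarrow> A $$ (i,j) = A $$ (j,i)"
  shows "\<exists>es. proots (char_poly A) = mset es \<and> (\<forall>k. tr (A ^\<^sub>m k) = (\<Sum>e\<leftarrow>es. e ^ k))"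
proof -
  let ?Ac = "map_mat complex_of_real A"
  have Ac: "?Ac \<in> carrier_mat n n" using A by simp
  obtain cs where cp: "char_poly ?Ac = (\<Prod>a\<leftarrow>cs. [:- a, 1:])" and len: "length cs = n"
    using char_poly_factorized[OF Ac] by blast
  have real: "\<And>c. c \<in> set cs \<Longrightarrow> Im c = 0"
  proof -
    fix c assume c: "c \<in> set cs"
    have "poly (char_poly ?Ac) c = 0" unfolding cp poly_prod_list
      using c by (induction cs) auto
    then have "eigenvalue ?Ac c" using eigenvalue_root_char_poly[OF Ac] by simp
    then show "Im c = 0" using real_eigenvalue[OF A sym] by blast
  qed
  define es where "es = map Re cs"
  have cses: "cs = map complex_of_real es" unfolding es_def
    using real by (induction cs) (auto simp: complex_eq_iff)
  have mp: "map_poly complex_of_real (char_poly A) = map_poly complex_of_real (\<Prod>e\<leftarrow>es. [:- e, 1:])"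
    using of_real_hom.char_poly_hom[OF A] cp unfolding map_poly_linear_prod cses by metis
  have cpA: "char_poly A = (\<Prod>e\<leftarrow>es. [:- e, 1:])"
  proof (intro poly_eqI)
    fix i
    show "coeff (char_poly A) i = coeff (\<Prod>e\<leftarrow>es. [:- e, 1:]) i"
      using arg_cong[OF mp, of "\<lambda>p. coeff p i"] by simp
  qed
  obtain B P Q where sch: "schur_decomposition ?Ac cs = (B,P,Q)"
    by (cases "schur_decomposition ?Ac cs") auto
  from schur_decomposition[OF Ac cp sch]
  have wit: "similar_mat_wit ?Ac B P Q" and ut: "upper_triangular B" and dg: "diag_mat B = cs" by auto
  from similar_mat_witD2[OF Ac wit] have B: "B \<in> carrier_mat n n" and P: "P \<in> carrier_mat n n"
    and Q: "Q \<in> carrier_mat n n" and QP: "Q * P = 1\<^sub>m n" by auto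
  have "\<forall>k. tr (A ^\<^sub>m k) = (\<Sum>e\<leftarrow>es. e ^ k)"
  proof
    fix k
    have Bk: "B ^\<^sub>m k \<in> carrier_mat n n" using B by simp
    have "complex_of_real (tr (A ^\<^sub>m k)) = tr (map_mat complex_of_real (A ^\<^sub>m k))"
      unfolding tr_def using A by (simp add: of_real_sum)
    also have "\<dots> = tr (?Ac ^\<^sub>m k)" using of_real_hom.mat_hom_pow[OF A] by metis
    also have "\<dots> = tr ((P * B ^\<^sub>m k) * Q)" using similar_mat_wit_pow_id[OF wit] by simp
    also have "\<dots> = tr (Q * (P * B ^\<^sub>m k))" using P Bk Q by (intro tr_mult_comm) auto
    also have "Q * (P * B ^\<^sub>m k) = (Q * P) * B ^\<^sub>m k" using P Bk Q by simp
    also have "\<dots> = B ^\<^sub>m k" using QP Bk by (simp add: left_mult_one_mat)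
    also have "tr (B ^\<^sub>m k) = (\<Sum>i\<in>{0..<n}. (B $$ (i,i)) ^ k)"
      unfolding tr_def using upper_pow[OF B ut] B by (intro sum.cong) auto
    also have "\<dots> = (\<Sum>i\<in>{0..<n}. (cs ! i) ^ k)"
      using dg B unfolding diag_mat_def by (intro sum.cong) auto
    also have "\<dots> = (\<Sum>c\<leftarrow>cs. c ^ k)" using len by (simp add: sum_list_sum_nth)
    also have "\<dots> = complex_of_real (\<Sum>e\<leftarrow>es. e ^ k)" unfolding cses
      by (induction es) auto
    finally show "tr (A ^\<^sub>m k) = (\<Sum>e\<leftarrow>es. e ^ k)" using of_real_eq_iff by blast
  qed
  then show ?thesis using cpA proots_linear_prod[of es] by metis
qed



lemma adj_carrier: "adj_matrix n E \<in> carrier_mat n n"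
  unfolding adj_matrix_def by simp

lemma adj_index: "i < n \<Longrightarrow> j < n \<Longrightarrow> adj_matrix n E $$ (i,j) = (if E i j then 1 else 0)"
  unfolding adj_matrix_def by simp

lemma EE_sums:
  assumes g: "simple_graph n E"
  shows "(\<lambda>k. tr (adj_matrix n E ^\<^sub>m k) / fact k) sums estrada_index n E"
proof -
  let ?A = "adj_matrix n E"
  have sym: "\<And>i j. i < n \<Longrightarrow> j < n \<Longrightarrow> ?A $$ (i,j) = ?A $$ (j,i)"
    using g unfolding simple_graph_def by (simp add: adj_index)
  obtain es where pr: "proots (char_poly ?A) = mset es" and trk: "\<And>k. tr (?A ^\<^sub>m k) = (\<Sum>e\<leftarrow>es. e ^ k)"
    using spectral[OF adj_carrier sym] by blast
  have ee: "estrada_index n E = (\<Sum>i\<in>{0..<length es}. exp (es ! i))"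
    unfolding estrada_index_def pr
    by (simp add: sum_list_sum_nth sum_mset_sum_list flip: mset_map)
  have "(\<lambda>k. \<Sum>i\<in>{0..<length es}. (es ! i) ^ k / fact k) sums (\<Sum>i\<in>{0..<length es}. exp (es ! i))"
  proof (rule sums_sum)
    fix i
    show "(\<lambda>k. (es ! i) ^ k / fact k) sums exp (es ! i)"
      using exp_converges[of "es ! i"] by (simp add: divide_inverse mult.commute)
  qed
  moreover have "\<And>k. (\<Sum>i\<in>{0..<length es}. (es ! i) ^ k / fact k) = tr (?A ^\<^sub>m k) / fact k"
    unfolding trk by (simp add: sum_list_sum_nth sum_divide_distrib)
  ultimately show ?thesis unfolding ee by simp
qed

lemma pow_mono_nonneg:
  fixes A B :: "real mat"
  assumes A: "A \<in> carrier_mat n n" and B: "B \<in> carrier_mat n n"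
    and le: "\<And>i j. i < n \<Longrightarrow> j < n \<Longrightarrow> 0 \<le> A $$ (i,j) \<and> A $$ (i,j) \<le> B $$ (i,j)"
  shows "\<forall>i<n. \<forall>j<n. 0 \<le> (A ^\<^sub>m k) $$ (i,j) \<and> (A ^\<^sub>m k) $$ (i,j) \<le> (B ^\<^sub>m k) $$ (i,j)"
proof (induction k)
  case 0 then show ?case using A B by auto
next
  case (Suc k)
  have Ak: "A ^\<^sub>m k \<in> carrier_mat n n" and Bk: "B ^\<^sub>m k \<in> carrier_mat n n" using A B by auto
  show ?case
  proof (intro allI impI)
    fix i j assume i: "i < n" and j: "j < n"
    have eA: "(A ^\<^sub>m Suc k) $$ (i,j) = (\<Sum>l\<in>{0..<n}. (A ^\<^sub>m k) $$ (i,l) * A $$ (l,j))"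
      using A Ak i j by (auto simp: scalar_prod_def intro!: sum.cong)
    have eB: "(B ^\<^sub>m Suc k) $$ (i,j) = (\<Sum>l\<in>{0..<n}. (B ^\<^sub>m k) $$ (i,l) * B $$ (l,j))"
      using B Bk i j by (auto simp: scalar_prod_def intro!: sum.cong)
    show "0 \<le> (A ^\<^sub>m Suc k) $$ (i,j) \<and> (A ^\<^sub>m Suc k) $$ (i,j) \<le> (B ^\<^sub>m Suc k) $$ (i,j)"
      unfolding eA eB
    proof
      show "0 \<le> (\<Sum>l\<in>{0..<n}. (A ^\<^sub>m k) $$ (i,l) * A $$ (l,j))"
        using Suc.IH le i j by (intro sum_nonneg) auto
      show "(\<Sum>l\<in>{0..<n}. (A ^\<^sub>m k) $$ (i,l) * A $$ (l,j)) \<le> (\<Sum>l\<in>{0..<n}. (B ^\<^sub>m k) $$ (i,l) * B $$ (l,j))"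
      proof (intro sum_mono mult_mono)
        fix l assume l: "l \<in> {0..<n}"
        show "(A ^\<^sub>m k) $$ (i,l) \<le> (B ^\<^sub>m k) $$ (i,l)" "A $$ (l,j) \<le> B $$ (l,j)"
          "0 \<le> A $$ (l,j)" using Suc.IH le i j l by auto
        show "0 \<le> (B ^\<^sub>m k) $$ (i,l)" using Suc.IH i l by (meson atLeastLessThan_iff order_trans)
      qed
    qed
  qed
qed

lemma subgraph_tr_le:
  assumes "\<And>i j. i < n \<Longrightarrow> j < n \<Longrightarrow> F i j \<Longrightarrow> E i j"
  shows "tr (adj_matrix n F ^\<^sub>m k) \<le> tr (adj_matrix n E ^\<^sub>m k)"
proof -
  have "\<forall>i<n. \<forall>j<n. 0 \<le> (adj_matrix n F ^\<^sub>m k) $$ (i,j) \<and> (adj_matrix n F ^\<^sub>m k) $$ (i,j) \<le> (adj_matrix n E ^\<^sub>m k) $$ (i,j)"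
    by (rule pow_mono_nonneg[OF adj_carrier adj_carrier]) (use assms in \<open>auto simp: adj_index\<close>)
  then show ?thesis unfolding tr_def using adj_carrier[of n F] adj_carrier[of n E]
    by (auto intro!: sum_mono)
qed

lemma subgraph_tr2_less:
  assumes "\<And>i j. i < n \<Longrightarrow> j < n \<Longrightarrow> F i j \<Longrightarrow> E i j"
    and g: "simple_graph n E" and a: "a < n" and b: "b < n" and ab: "E a b" and nab: "\<not> F a b"
  shows "tr (adj_matrix n F ^\<^sub>m 2) < tr (adj_matrix n E ^\<^sub>m 2)"
proof -
  have e: "\<And>G. tr (adj_matrix n G ^\<^sub>m 2) = (\<Sum>i\<in>{0..<n}. \<Sum>l\<in>{0..<n}. (if G i l then 1 else 0) * (if G l i then 1 else 0))"
    unfolding tr_def using adj_carrier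
    by (auto simp: numeral_2_eq_2 scalar_prod_def adj_index adj_matrix_def intro!: sum.cong)
  have ba: "E b a" using g a b ab unfolding simple_graph_def by auto
  show ?thesis unfolding e
  proof (rule sum_strict_mono_ex1)
    show "\<forall>i\<in>{0..<n}. (\<Sum>l\<in>{0..<n}. (if F i l then 1 else 0) * (if F l i then 1 else 0) :: real)
       \<le> (\<Sum>l\<in>{0..<n}. (if E i l then 1 else 0) * (if E l i then 1 else 0))"
      using assms(1) by (auto intro!: sum_mono)
    show "\<exists>i\<in>{0..<n}. (\<Sum>l\<in>{0..<n}. (if F i l then 1 else 0) * (if F l i then 1 else 0) :: real)
       < (\<Sum>l\<in>{0..<n}. (if E i l then 1 else 0) * (if E l i then 1 else 0))"
    proof (rule bexI[of _ a])
     show "(\<Sum>l\<in>{0..<n}. (if F a l then 1 else 0) * (if F l a then 1 else 0) :: real)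
       < (\<Sum>l\<in>{0..<n}. (if E a l then 1 else 0) * (if E l a then 1 else 0))"
     proof (rule sum_strict_mono_ex1)
      show "\<forall>l\<in>{0..<n}. (if F a l then 1 else 0) * (if F l a then 1 else 0) \<le> ((if E a l then 1 else 0) * (if E l a then 1 else 0) :: real)"
        using assms(1) a by auto
      show "\<exists>l\<in>{0..<n}. (if F a l then 1 else 0) * (if F l a then 1 else 0) < ((if E a l then 1 else 0) * (if E l a then 1 else 0) :: real)"
        using nab ab ba b by (intro bexI[of _ b]) auto
     qed auto
    qed (use a in auto)
  qed auto
qed

lemma subgraph_EE:
  assumes sub: "\<And>i j. i < n \<Longrightarrow> j < n \<Longrightarrow> F i j \<Longrightarrow> E i j"
    and g: "simple_graph n E" and gF: "simple_graph n F"
  shows "estrada_index n F \<le> estrada_index n E"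
    and "(\<exists>a<n. \<exists>b<n. E a b \<and> \<not> F a b) \<Longrightarrow> estrada_index n F < estrada_index n E"
proof -
  have d: "(\<lambda>k. tr (adj_matrix n E ^\<^sub>m k) / fact k - tr (adj_matrix n F ^\<^sub>m k) / fact k) sums (estrada_index n E - estrada_index n F)"
    by (intro sums_diff EE_sums g gF)
  have nn: "\<And>k. 0 \<le> tr (adj_matrix n E ^\<^sub>m k) / fact k - tr (adj_matrix n F ^\<^sub>m k) / fact k"
    using subgraph_tr_le[OF sub] by (simp add: divide_right_mono)
  show "estrada_index n F \<le> estrada_index n E"
    using sums_le[OF nn sums_zero d] by simp
  assume "\<exists>a<n. \<exists>b<n. E a b \<and> \<not> F a b"
  then obtain a b where ab: "a < n" "b < n" "E a b" "\<not> F a b" by blast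
  have "0 < tr (adj_matrix n E ^\<^sub>m 2) / fact 2 - tr (adj_matrix n F ^\<^sub>m 2) / fact 2"
    using subgraph_tr2_less[where F=F and E=E, OF sub g ab] by (simp add: divide_strict_right_mono)
  then have "0 < estrada_index n E - estrada_index n F"
    using suminf_pos2[OF sums_summable[OF d] nn] sums_unique[OF d] by metis
  then show "estrada_index n F < estrada_index n E" by simp
qed



definition starE :: "(nat \<Rightarrow> nat \<Rightarrow> bool) \<Rightarrow> nat \<Rightarrow> nat \<Rightarrow> nat \<Rightarrow> bool" where
  "starE E u i j \<longleftrightarrow> (i = u \<and> E u j) \<or> (j = u \<and> E u i)"

lemma star_simple: "simple_graph n E \<Longrightarrow> u < n \<Longrightarrow> simple_graph n (starE E u)"
  unfolding simple_graph_def starE_def by auto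

lemma star_sub: "simple_graph n E \<Longrightarrow> u < n \<Longrightarrow> i < n \<Longrightarrow> j < n \<Longrightarrow> starE E u i j \<Longrightarrow> E i j"
  unfolding simple_graph_def starE_def by auto

lemma smult_one_mat': "(1::'a::semiring_1) \<cdot>\<^sub>m A = A"
  by (rule eq_matI) auto

lemma tr_smult: "M \<in> carrier_mat n n \<Longrightarrow> tr (c \<cdot>\<^sub>m M) = c * tr M"
  unfolding tr_def by (auto simp: sum_distrib_left)

lemma sum_ind_delta: "u < (n::nat) \<Longrightarrow> (\<Sum>l\<in>{0..<n}. if l = u \<and> P then c else 0) = (if P then c else (0::real))"
  by (cases P) (auto simp: sum.delta)

lemma sum_ind_N: "N \<subseteq> {0..<(n::nat)} \<Longrightarrow> (\<Sum>l\<in>{0..<n}. if l \<in> N \<and> P then c else 0) = (if P then c * real (card N) else (0::real))"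
proof (cases P)
  case True
  assume N: "N \<subseteq> {0..<n}"
  have e: "{x\<in>{0..<n}. x \<in> N} = N" using N by auto
  have "(\<Sum>l\<in>{0..<n}. if l \<in> N then c else 0) = (\<Sum>l\<in>N. c)"
    using sum.inter_filter[of "{0..<n}" "\<lambda>_. c" "\<lambda>x. x \<in> N"] e by simp
  then show ?thesis using True by simp
qed simp

lemma if_disj_real: "\<not> (P \<and> Q) \<Longrightarrow> (if P \<or> Q then 1 else 0) = (if P then 1 else 0) + (if Q then 1 else (0::real))"
  by auto

lemma prod_ind: "\<not> (a1 \<and> b1) \<Longrightarrow> \<not> (a2 \<and> b2) \<Longrightarrow>
  ((if a1 then 1 else 0) + (if a2 then 1 else 0)) * ((if b1 then 1 else 0) + (if b2 then 1 else (0::real)))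
  = (if a1 \<and> b2 then 1 else 0) + (if a2 \<and> b1 then 1 else 0)"
  by auto

lemma prod_ind2: "\<not> (a1 \<and> b2) \<Longrightarrow> \<not> (a2 \<and> b1) \<Longrightarrow>
  ((if a1 then d else 0) + (if a2 then 1 else 0)) * ((if b1 then 1 else 0) + (if b2 then 1 else (0::real)))
  = (if a1 \<and> b1 then d else 0) + (if a2 \<and> b2 then 1 else 0)"
  by auto

context
  fixes n :: nat and E :: "nat \<Rightarrow> nat \<Rightarrow> bool" and u :: nat
  assumes g: "simple_graph n E" and u: "u < n"
begin

definition "NN = {j. j < n \<and> E u j}"
definition "AA = adj_matrix n (starE E u)"

lemma NN_sub: "NN \<subseteq> {0..<n}" unfolding NN_def by auto
lemma u_NN: "u \<notin> NN" using g u unfolding NN_def simple_graph_def by auto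
lemma AA: "AA \<in> carrier_mat n n" unfolding AA_def by (rule adj_carrier)
lemma card_NN: "card NN = degree n E u" unfolding NN_def degree_def by simp

lemma AA_index: "i < n \<Longrightarrow> j < n \<Longrightarrow> AA $$ (i,j) =
   (if i = u \<and> j \<in> NN then 1 else 0) + (if j = u \<and> i \<in> NN then 1 else 0)"
proof -
  assume i: "i < n" and j: "j < n"
  have s: "starE E u i j \<longleftrightarrow> (i = u \<and> j \<in> NN) \<or> (j = u \<and> i \<in> NN)"
    using i j unfolding starE_def NN_def by auto
  have x: "\<not> ((i = u \<and> j \<in> NN) \<and> (j = u \<and> i \<in> NN))" using u_NN by auto
  have e: "AA $$ (i,j) = (if (i = u \<and> j \<in> NN) \<or> (j = u \<and> i \<in> NN) then 1 else 0)"
    unfolding AA_def adj_index[OF i j] s by (rule refl)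
  show ?thesis unfolding e using if_disj_real[OF x] .
qed

lemma AA_sq: "i < n \<Longrightarrow> j < n \<Longrightarrow> (AA * AA) $$ (i,j) =
   (if i = u \<and> j = u then real (card NN) else 0) + (if i \<in> NN \<and> j \<in> NN then 1 else 0)"
proof -
  assume i: "i < n" and j: "j < n"
  have "(AA * AA) $$ (i,j) = (\<Sum>l\<in>{0..<n}. AA $$ (i,l) * AA $$ (l,j))"
    using AA i j by (auto simp: scalar_prod_def intro!: sum.cong)
  also have "\<dots> = (\<Sum>l\<in>{0..<n}. (if l \<in> NN \<and> (i = u \<and> j = u) then 1 else 0) + (if l = u \<and> (i \<in> NN \<and> j \<in> NN) then 1 else 0))"
  proof (intro sum.cong refl)
    fix l assume "l \<in> {0..<n}"
    then have l: "l < n" by simp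
    have p1: "\<not> ((i = u \<and> l \<in> NN) \<and> (l = u \<and> j \<in> NN))" using u_NN by blast
    have p2: "\<not> ((l = u \<and> i \<in> NN) \<and> (j = u \<and> l \<in> NN))" using u_NN by blast
    have c1: "((i = u \<and> l \<in> NN) \<and> (j = u \<and> l \<in> NN)) = (l \<in> NN \<and> (i = u \<and> j = u))" by blast
    have c2: "((l = u \<and> i \<in> NN) \<and> (l = u \<and> j \<in> NN)) = (l = u \<and> (i \<in> NN \<and> j \<in> NN))" by blast
    show "AA $$ (i,l) * AA $$ (l,j) = (if l \<in> NN \<and> (i = u \<and> j = u) then 1 else 0) + (if l = u \<and> (i \<in> NN \<and> j \<in> NN) then 1 else 0)"
      unfolding AA_index[OF i l] AA_index[OF l j] prod_ind[OF p1 p2] c1 c2 by (rule refl)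
  qed
  also have "\<dots> = (if i = u \<and> j = u then 1 * real (card NN) else 0) + (if i \<in> NN \<and> j \<in> NN then 1 else 0)"
    by (simp only: sum.distrib sum_ind_N[OF NN_sub] sum_ind_delta[OF u])
  finally show ?thesis by simp
qed

lemma AA_cube: "AA * AA * AA = real (card NN) \<cdot>\<^sub>m AA"
proof (rule eq_matI)
  fix i j assume i: "i < dim_row (real (card NN) \<cdot>\<^sub>m AA)" and j: "j < dim_col (real (card NN) \<cdot>\<^sub>m AA)"
  then have i: "i < n" and j: "j < n" using AA by auto
  have "(AA * AA * AA) $$ (i,j) = (\<Sum>l\<in>{0..<n}. (AA * AA) $$ (i,l) * AA $$ (l,j))"
    using AA i j by (auto simp del: assoc_mult_mat simp: scalar_prod_def intro!: sum.cong)
  also have "\<dots> = (\<Sum>l\<in>{0..<n}. (if l = u \<and> (i = u \<and> j \<in> NN) then real (card NN) else 0) + (if l \<in> NN \<and> (i \<in> NN \<and> j = u) then 1 else 0))"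
  proof (intro sum.cong refl)
    fix l assume "l \<in> {0..<n}"
    then have l: "l < n" by simp
    have p1: "\<not> ((i = u \<and> l = u) \<and> (j = u \<and> l \<in> NN))" using u_NN by blast
    have p2: "\<not> ((i \<in> NN \<and> l \<in> NN) \<and> (l = u \<and> j \<in> NN))" using u_NN by blast
    have c1: "((i = u \<and> l = u) \<and> (l = u \<and> j \<in> NN)) = (l = u \<and> (i = u \<and> j \<in> NN))" by blast
    have c2: "((i \<in> NN \<and> l \<in> NN) \<and> (j = u \<and> l \<in> NN)) = (l \<in> NN \<and> (i \<in> NN \<and> j = u))" by blast
    show "(AA * AA) $$ (i,l) * AA $$ (l,j) = (if l = u \<and> (i = u \<and> j \<in> NN) then real (card NN) else 0) + (if l \<in> NN \<and> (i \<in> NN \<and> j = u) then 1 else 0)"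
      unfolding AA_sq[OF i l] AA_index[OF l j] prod_ind2[OF p1 p2] c1 c2 by (rule refl)
  qed
  also have "\<dots> = (if i = u \<and> j \<in> NN then real (card NN) else 0) + (if i \<in> NN \<and> j = u then 1 * real (card NN) else 0)"
    by (simp only: sum.distrib sum_ind_N[OF NN_sub] sum_ind_delta[OF u])
  also have "\<dots> = (real (card NN) \<cdot>\<^sub>m AA) $$ (i,j)"
    using i j AA by (auto simp: AA_index)
  finally show "(AA * AA * AA) $$ (i,j) = (real (card NN) \<cdot>\<^sub>m AA) $$ (i,j)" .
qed (use AA in auto)

lemma AA_pow: "AA ^\<^sub>m (2*m+1) = real (card NN) ^ m \<cdot>\<^sub>m AA \<and> AA ^\<^sub>m (2*m+2) = real (card NN) ^ m \<cdot>\<^sub>m (AA * AA)"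
proof (induction m)
  case 0 then show ?case using AA by (simp add: numeral_2_eq_2 left_mult_one_mat smult_one_mat')
next
  case (Suc m)
  have e1: "2 * Suc m + 1 = Suc (Suc (2*m+1))" and e2: "2 * Suc m + 2 = Suc (Suc (2*m+2))" by simp_all
  have "AA ^\<^sub>m (2 * Suc m + 1) = real (card NN) ^ m \<cdot>\<^sub>m AA * AA * AA"
    unfolding e1 using Suc by simp
  also have "\<dots> = real (card NN) ^ m \<cdot>\<^sub>m (AA * AA * AA)"
    using AA by (simp add: mult_smult_assoc_mat[of _ n n])
  also have "\<dots> = real (card NN) ^ Suc m \<cdot>\<^sub>m AA"
    unfolding AA_cube by (rule eq_matI) (use AA in auto)
  finally have 1: "AA ^\<^sub>m (2 * Suc m + 1) = real (card NN) ^ Suc m \<cdot>\<^sub>m AA" .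
  have "AA ^\<^sub>m (2 * Suc m + 2) = AA ^\<^sub>m (2 * Suc m + 1) * AA"
    by (simp add: numeral_2_eq_2)
  also have "\<dots> = real (card NN) ^ Suc m \<cdot>\<^sub>m (AA * AA)"
    unfolding 1 using AA by (simp add: mult_smult_assoc_mat[of _ n n])
  finally show ?case using 1 by simp
qed

lemma tr_AA: "tr AA = 0"
  unfolding tr_def using AA u_NN by (auto simp: AA_index intro!: sum.neutral)

lemma tr_AA2: "tr (AA * AA) = 2 * real (card NN)"
proof -
  have "tr (AA * AA) = (\<Sum>i\<in>{0..<n}. (if i = u \<and> True then real (card NN) else 0) + (if i \<in> NN \<and> True then 1 else 0))"
  proof -
    have "tr (AA * AA) = (\<Sum>i\<in>{0..<n}. (AA * AA) $$ (i,i))" unfolding tr_def using AA by simp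
    also have "\<dots> = (\<Sum>i\<in>{0..<n}. (if i = u \<and> True then real (card NN) else 0) + (if i \<in> NN \<and> True then 1 else 0))"
    proof (rule sum.cong[OF refl])
      fix i assume "i \<in> {0..<n}"
      then have i: "i < n" by simp
      show "(AA * AA) $$ (i,i) = (if i = u \<and> True then real (card NN) else 0) + (if i \<in> NN \<and> True then 1 else 0)"
        unfolding AA_sq[OF i i] by simp
    qed
    finally show ?thesis .
  qed
  also have "\<dots> = real (card NN) + 1 * real (card NN)"
    by (simp only: sum.distrib sum_ind_N[OF NN_sub] sum_ind_delta[OF u] if_True)
  finally show ?thesis by simp
qed

lemma tr_AA_pow: "tr (AA ^\<^sub>m k) = sqrt (card NN) ^ k + (- sqrt (card NN)) ^ k + (if k = 0 then real n - 2 else 0)"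
proof -
  let ?d = "real (card NN)"
  consider "k = 0" | m where "k = 2*m+1" | m where "k = 2*m+2"
  proof -
    assume h0: "k = 0 \<Longrightarrow> thesis" and h1: "\<And>m. k = 2*m+1 \<Longrightarrow> thesis" and h2: "\<And>m. k = 2*m+2 \<Longrightarrow> thesis"
    show thesis
    proof (cases "even k")
      case True
      then obtain m' where m': "k = 2*m'" by blast
      show thesis
      proof (cases m')
        case 0 then show thesis using h0 m' by simp
      next
        case (Suc m) then show thesis using h2[of m] m' by simp
      qed
    next
      case False
      then obtain m where "k = 2*m+1" using oddE by blast
      then show thesis using h1 by blast
    qed
  qed
  then show ?thesis
  proof cases
    case 1 then show ?thesis using AA unfolding tr_def by simp
  next
    case 2
    have "(- sqrt ?d) ^ k = - (sqrt ?d ^ k)" using 2 by (simp add: power_minus_odd)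
    have P: "AA ^\<^sub>m k = ?d ^ m \<cdot>\<^sub>m AA" unfolding 2 using AA_pow[of m] by blast
    have "tr (AA ^\<^sub>m k) = ?d ^ m * 0" unfolding P tr_AA[symmetric] using AA by (rule tr_smult)
    then show ?thesis using \<open>(- sqrt ?d) ^ k = - (sqrt ?d ^ k)\<close> 2 by simp
  next
    case 3
    have k2: "k = 2 * (m+1)" using 3 by simp
    have "sqrt ?d ^ k = (sqrt ?d ^ 2) ^ (m+1)" unfolding k2 by (rule power_mult)
    then have "sqrt ?d ^ k = ?d ^ (m+1)" by simp
    moreover have "(- sqrt ?d) ^ k = sqrt ?d ^ k" using 3 by (simp add: power_minus_even)
    moreover have P: "AA ^\<^sub>m k = ?d ^ m \<cdot>\<^sub>m (AA * AA)" unfolding 3 using AA_pow[of m] by blast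
    moreover have "tr (AA ^\<^sub>m k) = ?d ^ m * (2 * ?d)" unfolding P tr_AA2[symmetric]
      by (rule tr_smult[of _ n]) (use AA in auto)
    ultimately show ?thesis using 3 by simp
  qed
qed

lemma star_EE: "estrada_index n (starE E u) = 2 * cosh (sqrt (real (degree n E u))) + (real n - 2)"
proof -
  let ?s = "sqrt (real (card NN))"
  have "(\<lambda>k. ?s ^ k / fact k + (- ?s) ^ k / fact k + (if k = 0 then real n - 2 else 0))
        sums (exp ?s + exp (- ?s) + (real n - 2))"
  proof (intro sums_add)
    show "(\<lambda>k. ?s ^ k / fact k) sums exp ?s"
      using exp_converges[of ?s] by (simp add: divide_inverse mult.commute)
    show "(\<lambda>k. (- ?s) ^ k / fact k) sums exp (- ?s)"
      using exp_converges[of "- ?s"] by (simp add: divide_inverse mult.commute)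
    show "(\<lambda>k. if k = 0 then real n - 2 else 0) sums (real n - 2)"
      using sums_single[of 0 "\<lambda>_. real n - 2"] by simp
  qed
  moreover have "\<And>k. ?s ^ k / fact k + (- ?s) ^ k / fact k + (if k = 0 then real n - 2 else 0)
     = tr (AA ^\<^sub>m k) / fact k"
    unfolding tr_AA_pow by (simp add: add_divide_distrib)
  ultimately have "(\<lambda>k. tr (AA ^\<^sub>m k) / fact k) sums (exp ?s + exp (- ?s) + (real n - 2))" by simp
  moreover have "(\<lambda>k. tr (AA ^\<^sub>m k) / fact k) sums estrada_index n (starE E u)"
    unfolding AA_def by (rule EE_sums[OF star_simple[OF g u]])
  ultimately have "estrada_index n (starE E u) = exp ?s + exp (- ?s) + (real n - 2)"
    using sums_unique2 by blast
  then show ?thesis unfolding cosh_def card_NN by simp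
qed

end



lemma agree_adj: "(\<And>i j. i < n \<Longrightarrow> j < n \<Longrightarrow> E i j = F i j) \<Longrightarrow> adj_matrix n E = adj_matrix n F"
  by (rule eq_matI) (auto simp: adj_index adj_matrix_def)

lemma agree_EE: "(\<And>i j. i < n \<Longrightarrow> j < n \<Longrightarrow> E i j = F i j) \<Longrightarrow> estrada_index n E = estrada_index n F"
  unfolding estrada_index_def using agree_adj by metis

lemma iso_star_EE:
  assumes g: "simple_graph n E" and he: "has_edge n E" and iso: "graph_iso n E (star_plus_isolated k)"
  shows "estrada_index n E = 2 * cosh (sqrt (real (max_degree n E))) + (real n - 2)"
proof -
  obtain f where bij: "bij_betw f {0..<n} {0..<n}" and fe: "\<And>i j. i < n \<Longrightarrow> j < n \<Longrightarrow> E i j \<longleftrightarrow> star_plus_isolated k (f i) (f j)"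
    using iso unfolding graph_iso_def by blast
  obtain a b where ab: "a < n" "b < n" "E a b" using he unfolding has_edge_def by blast
  have "0 \<in> f ` {0..<n}" using bij ab unfolding bij_betw_def by auto
  then obtain v where v: "v < n" "f v = 0" by auto
  have inj: "\<And>i j. i < n \<Longrightarrow> j < n \<Longrightarrow> f i = f j \<Longrightarrow> i = j"
    using bij unfolding bij_betw_def inj_on_def by auto
  have ev: "\<And>i j. i < n \<Longrightarrow> j < n \<Longrightarrow> E i j \<Longrightarrow> i = v \<or> j = v"
  proof -
    fix i j assume i: "i < n" and j: "j < n" and e: "E i j"
    then have "f i = 0 \<or> f j = 0" using fe unfolding star_plus_isolated_def by auto
    then show "i = v \<or> j = v" using inj[OF i v(1)] inj[OF j v(1)] v(2) by auto
  qed
  have sym: "\<And>i j. i < n \<Longrightarrow> j < n \<Longrightarrow> E i j = E j i" using g unfolding simple_graph_def by auto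
  have agree: "\<And>i j. i < n \<Longrightarrow> j < n \<Longrightarrow> E i j = starE E v i j"
  proof -
    fix i j assume i: "i < n" and j: "j < n"
    show "E i j = starE E v i j"
    proof
      assume "E i j"
      then show "starE E v i j" using ev[OF i j] sym[OF i j] unfolding starE_def by auto
    next
      assume "starE E v i j"
      then show "E i j" using star_sub[OF g v(1) i j] by blast
    qed
  qed
  have dv: "degree n E v \<ge> 1"
  proof -
    have "a = v \<or> b = v" using ev ab by blast
    then have "\<exists>w. w < n \<and> E v w" using ab sym by blast
    then have "{j. j < n \<and> E v j} \<noteq> {}" by blast
    moreover have "finite {j. j < n \<and> E v j}" by simp
    ultimately show ?thesis unfolding degree_def by (simp add: Suc_leI card_gt_0_iff)
  qed
  have "max_degree n E = degree n E v"
    unfolding max_degree_def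
  proof (rule Max_eqI)
    fix y assume "y \<in> degree n E ` {0..<n}"
    then obtain w where w: "w < n" "y = degree n E w" by auto
    show "y \<le> degree n E v"
    proof (cases "w = v")
      case True then show ?thesis using w by simp
    next
      case False
      have "{j. j < n \<and> E w j} \<subseteq> {v}" using ev[OF w(1)] False by auto
      then have "degree n E w \<le> 1" unfolding degree_def
        using card_mono[of "{v}"] by fastforce
      then show ?thesis using w dv by simp
    qed
  qed (use v in auto)
  then show ?thesis using agree_EE[OF agree] star_EE[OF g v(1)] by simp
qed

lemma star_iso_construct:
  assumes g: "simple_graph n E" and u: "u < n"
    and agree: "\<And>i j. i < n \<Longrightarrow> j < n \<Longrightarrow> E i j = starE E u i j"
  shows "graph_iso n E (star_plus_isolated (degree n E u + 1))"
proof -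
  define N where "N = {j. j < n \<and> E u j}"
  define d where "d = degree n E u"
  have dN: "card N = d" unfolding N_def d_def degree_def by simp
  have uN: "u \<notin> N" using g u unfolding N_def simple_graph_def by auto
  have Nsub: "N \<subseteq> {0..<n} - {u}" using uN unfolding N_def by auto
  define M where "M = {0..<n} - N - {u}"
  have cardN: "d \<le> n - 1" using card_mono[OF _ Nsub] dN u by simp
  have cardM: "card M = n - d - 1"
  proof -
    have Meq: "M = ({0..<n} - {u}) - N" unfolding M_def by auto
    have fN: "finite N" unfolding N_def by simp
    have "card M = card ({0..<n} - {u}) - card N"
      unfolding Meq by (rule card_Diff_subset[OF fN Nsub])
    moreover have "card ({0..<n} - {u}) = n - 1" using u by simp
    ultimately show ?thesis using dN by simp
  qed
  obtain h where h: "bij_betw h N {1..<d+1}"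
    using finite_same_card_bij[of N "{1..<d+1}"] dN unfolding N_def by auto
  obtain gg where gg: "bij_betw gg M {d+1..<n}"
    using finite_same_card_bij[of M "{d+1..<n}"] cardM unfolding M_def by auto
  have b1: "bij_betw (\<lambda>x. if x \<in> N then h x else gg x) (N \<union> M) ({1..<d+1} \<union> {d+1..<n})"
    by (rule bij_betw_disjoint_Un[OF h gg]) (auto simp: M_def)
  have b0: "bij_betw (\<lambda>x. 0::nat) {u} {0}" by (simp add: bij_betw_def)
  define f where "f = (\<lambda>x. if x \<in> {u} then 0 else (if x \<in> N then h x else gg x))"
  have bf: "bij_betw f ({u} \<union> (N \<union> M)) ({0} \<union> ({1..<d+1} \<union> {d+1..<n}))"
    unfolding f_def by (rule bij_betw_disjoint_Un[OF b0 b1]) (auto simp: M_def uN)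
  have s1: "{u} \<union> (N \<union> M) = {0..<n}" using Nsub u unfolding M_def by auto
  have s2: "{0} \<union> ({1..<d+1} \<union> {d+1..<n}) = {0..<n}" using cardN u by auto
  have bf': "bij_betw f {0..<n} {0..<n}" using bf unfolding s1 s2 .
  have fu: "f u = 0" unfolding f_def by simp
  have fN: "\<And>i. i \<in> N \<Longrightarrow> 1 \<le> f i \<and> f i < d+1"
    using h uN unfolding f_def bij_betw_def by auto
  have fM: "\<And>i. i \<in> M \<Longrightarrow> d+1 \<le> f i"
    using gg unfolding f_def bij_betw_def M_def by auto
  have inj: "\<And>i j. i < n \<Longrightarrow> j < n \<Longrightarrow> f i = f j \<Longrightarrow> i = j"
    using bf' unfolding bij_betw_def inj_on_def by auto
  have cases3: "\<And>i. i < n \<Longrightarrow> i = u \<or> i \<in> N \<or> i \<in> M" unfolding M_def by auto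
  have "\<forall>i<n. \<forall>j<n. E i j \<longleftrightarrow> star_plus_isolated (d+1) (f i) (f j)"
  proof (intro allI impI)
    fix i j assume i: "i < n" and j: "j < n"
    have st: "E i j \<longleftrightarrow> (i = u \<and> j \<in> N) \<or> (j = u \<and> i \<in> N)"
      using agree[OF i j] i j unfolding starE_def N_def by auto
    have neq: "i \<noteq> j \<Longrightarrow> f i \<noteq> f j" using inj i j by blast
    have fa: "\<And>x. x < n \<Longrightarrow> (f x = 0 \<longleftrightarrow> x = u) \<and> (f x < d+1 \<longleftrightarrow> x = u \<or> x \<in> N)"
    proof -
      fix x assume x: "x < n"
      show "(f x = 0 \<longleftrightarrow> x = u) \<and> (f x < d+1 \<longleftrightarrow> x = u \<or> x \<in> N)"
      proof (cases "x = u")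
        case True then show ?thesis using fu by simp
      next
        case False
        then have "x \<in> N \<or> x \<in> M" using cases3[OF x] by blast
        then show ?thesis
        proof
          assume "x \<in> N" then show ?thesis using fN[of x] False by auto
        next
          assume xm: "x \<in> M"
          then have "x \<notin> N" unfolding M_def by blast
          then show ?thesis using fM[OF xm] False by auto
        qed
      qed
    qed
    have neq: "f i = f j \<longleftrightarrow> i = j" using inj i j by blast
    have "star_plus_isolated (d+1) (f i) (f j) \<longleftrightarrow>
       (i = u \<or> i \<in> N) \<and> (j = u \<or> j \<in> N) \<and> i \<noteq> j \<and> (i = u \<or> j = u)"
      unfolding star_plus_isolated_def using fa[OF i] fa[OF j] neq by simp
    then show "E i j \<longleftrightarrow> star_plus_isolated (d+1) (f i) (f j)"
      unfolding st using uN by blast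
  qed
  then show ?thesis unfolding graph_iso_def d_def using bf' by blast
qed

theorem mainTheorem9:
  fixes n :: nat and E :: "nat \<Rightarrow> nat \<Rightarrow> bool"
  assumes "simple_graph n E" and "bipartite n E" and "has_edge n E"
  defines "\<Delta> \<equiv> max_degree n E"
  shows "estrada_index n E \<ge> 2 * cosh (sqrt (real \<Delta>)) + (real n - 2) \<and>
         (estrada_index n E = 2 * cosh (sqrt (real \<Delta>)) + (real n - 2) \<longleftrightarrow>
           graph_iso n E (star_plus_isolated n) \<or> graph_iso n E (star_plus_isolated (\<Delta> + 1)))"
proof -
  note g = assms(1)
  obtain a b where ab: "a < n" "b < n" "E a b" using assms(3) unfolding has_edge_def by blast
  have ne: "degree n E ` {0..<n} \<noteq> {}" using ab by auto
  have "\<Delta> \<in> degree n E ` {0..<n}" unfolding \<Delta>_def max_degree_def by (rule Max_in[OF _ ne]) simp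
  then obtain u where u: "u < n" "degree n E u = \<Delta>" by auto
  have sg: "simple_graph n (starE E u)" by (rule star_simple[OF g u(1)])
  have sub: "\<And>i j. i < n \<Longrightarrow> j < n \<Longrightarrow> starE E u i j \<Longrightarrow> E i j" using star_sub[OF g u(1)] by blast
  have val: "estrada_index n (starE E u) = 2 * cosh (sqrt (real \<Delta>)) + (real n - 2)"
    using star_EE[OF g u(1)] u(2) by simp
  have ineq: "estrada_index n E \<ge> 2 * cosh (sqrt (real \<Delta>)) + (real n - 2)"
    using subgraph_EE(1)[OF sub g sg] val by simp
  have eq: "estrada_index n E = 2 * cosh (sqrt (real \<Delta>)) + (real n - 2) \<longleftrightarrow>
           graph_iso n E (star_plus_isolated n) \<or> graph_iso n E (star_plus_isolated (\<Delta> + 1))"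
  proof
    assume e: "estrada_index n E = 2 * cosh (sqrt (real \<Delta>)) + (real n - 2)"
    have noex: "\<not> (\<exists>a<n. \<exists>b<n. E a b \<and> \<not> starE E u a b)"
      using subgraph_EE(2)[OF sub g sg] val e by auto
    have agree: "\<And>i j. i < n \<Longrightarrow> j < n \<Longrightarrow> E i j = starE E u i j"
      using noex sub by blast
    show "graph_iso n E (star_plus_isolated n) \<or> graph_iso n E (star_plus_isolated (\<Delta> + 1))"
      using star_iso_construct[OF g u(1) agree] u(2) by simp
  next
    assume "graph_iso n E (star_plus_isolated n) \<or> graph_iso n E (star_plus_isolated (\<Delta> + 1))"
    then show "estrada_index n E = 2 * cosh (sqrt (real \<Delta>)) + (real n - 2)"
      using iso_star_EE[OF g assms(3)] unfolding \<Delta>_def by blast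
  qed
  show ?thesis using ineq eq by blast
qed


end
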